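(* Let $(g,f)$ be a Riordan matrix with $g(t)=\sum_{j\ge0}g_jt^j$, $g_0=1$, and $f(t)=\sum_{j\ge1}f_jt^j$, $f_1\neq0$. Then $(g,f)\in R_{1,1,1}$ if and only if $f_1=1$, $f_2=g_1$ and $g_2=g_1^2$; equivalently, $f_1=1$, $f_2=g_1$ and $g_2=f_2^2$.
   Context: Let $K$ be $\mathbb{R}$ or $\mathbb{C}$. A (proper) Riordan matrix is a pair $(g,f)$ of formal power series in $K[[t]]$ with $g(0)=1$, $f(0)=0$, $f'(0)\neq 0$. The $A$-sequence $(a_j)$ of $(g,f)$ is the unique sequence whose generating function $A(t)$ satisfies $f(t)=tA(f(t))$; the $Z$-sequence $(z_j)$ is the unique sequence whose generating function $Z(t)$ satisfies $g(t)=1/(1-tZ(f(t)))$. $R_{1,1,1}$ denotes the set of Riordan matrices with $a_0=1$, $z_0=a_1$ and $z_1=0$. *)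

theory Defs
  imports "HOL-Computational_Algebra.Formal_Power_Series"
begin

unbundle fps_syntax

definition riordan :: "'a::field fps \<Rightarrow> 'a fps \<Rightarrow> bool" where
  "riordan g f \<longleftrightarrow> g $ 0 = 1 \<and> f $ 0 = 0 \<and> f $ 1 \<noteq> 0"

definition A_seq :: "'a::field fps \<Rightarrow> 'a fps" where
  "A_seq f = (THE A. f = fps_X * (A oo f))"

definition Z_seq :: "'a::field fps \<Rightarrow> 'a fps \<Rightarrow> 'a fps" where
  "Z_seq g f = (THE Z. g = inverse (1 - fps_X * (Z oo f)))"

definition R111 :: "'a::field fps \<Rightarrow> 'a fps \<Rightarrow> bool" where
  "R111 g f \<longleftrightarrow> riordan g f \<and> A_seq f $ 0 = 1 \<and>
     Z_seq g f $ 0 = A_seq f $ 1 \<and> Z_seq g f $ 1 = 0"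

end

theory Submission
  imports Defs
begin

unbundle fps_syntax

lemma compose_surj:
  fixes f h :: "'a::field fps"
  assumes "f $ 0 = 0" "f $ 1 \<noteq> 0"
  shows "(h oo fps_inv f) oo f = h"
proof -
  have "fps_inv f $ 0 = 0" by (simp add: fps_inv_def)
  hence "(h oo fps_inv f) oo f = h oo (fps_inv f oo f)"
    using fps_compose_assoc[OF assms(1), of "fps_inv f" h] by simp
  also have "\<dots> = h" using fps_inv[OF assms] by simp
  finally show ?thesis .
qed

lemma X_cancel:
  fixes B C :: "'a::field fps"
  assumes "fps_X * B = fps_X * C" shows "B = C"
proof -
  have "fps_shift 1 (B * fps_X) = fps_shift 1 (C * fps_X)" using assms by (simp add: mult.commute)
  thus ?thesis by (metis fps_shift_times_fps_X')
qed

lemma A_char: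
  fixes g f :: "'a::field fps"
  assumes "riordan g f"
  shows "f = fps_X * (A_seq f oo f)"
proof -
  have f0: "f $ 0 = 0" and f1: "f $ 1 \<noteq> 0" using assms by (auto simp: riordan_def)
  define A0 where "A0 = fps_shift 1 f oo fps_inv f"
  have "A0 oo f = fps_shift 1 f" unfolding A0_def using compose_surj[OF f0 f1] by simp
  moreover have "fps_X * fps_shift 1 f = f"
    using f0 by (simp add: fps_eq_iff)
  ultimately have ex: "f = fps_X * (A0 oo f)" by simp
  have uniq: "\<And>B. f = fps_X * (B oo f) \<Longrightarrow> B = A0"
  proof -
    fix B assume "f = fps_X * (B oo f)"
    with ex have "B oo f = A0 oo f" using X_cancel by metis
    thus "B = A0" using fps_compose_inj_right[OF f0 f1] by blast
  qed
  have "A_seq f = A0" unfolding A_seq_def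
    by (rule the_equality[where P="\<lambda>A. f = fps_X * (A oo f)", OF ex uniq])
  thus ?thesis using ex by simp
qed

lemma Z_char:
  fixes g f :: "'a::field fps"
  assumes "riordan g f"
  shows "g = inverse (1 - fps_X * (Z_seq g f oo f))"
proof -
  have f0: "f $ 0 = 0" and f1: "f $ 1 \<noteq> 0" and g0: "g $ 0 = 1"
    using assms by (auto simp: riordan_def)
  define h where "h = 1 - inverse g"
  have h0: "h $ 0 = 0" using g0 by (simp add: h_def)
  define Z0 where "Z0 = fps_shift 1 h oo fps_inv f"
  have "Z0 oo f = fps_shift 1 h" unfolding Z0_def using compose_surj[OF f0 f1] by simp
  moreover have "fps_X * fps_shift 1 h = h"
    using h0 by (simp add: fps_eq_iff)
  ultimately have "1 - fps_X * (Z0 oo f) = inverse g" by (simp add: h_def)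
  hence ex: "g = inverse (1 - fps_X * (Z0 oo f))" using g0 by simp
  have uniq: "\<And>B. g = inverse (1 - fps_X * (B oo f)) \<Longrightarrow> B = Z0"
  proof -
    fix B assume B: "g = inverse (1 - fps_X * (B oo f))"
    have c: "\<And>W::'a fps. (1 - fps_X * W) $ 0 = 1" by simp
    have "inverse g = 1 - fps_X * (B oo f)" using B c[of "B oo f"]
      by (metis fps_inverse_idempotent one_neq_zero)
    moreover have "inverse g = 1 - fps_X * (Z0 oo f)" using ex c[of "Z0 oo f"]
      by (metis fps_inverse_idempotent one_neq_zero)
    ultimately have "fps_X * (B oo f) = fps_X * (Z0 oo f)" by simp
    hence "B oo f = Z0 oo f" using X_cancel by metis
    thus "B = Z0" using fps_compose_inj_right[OF f0 f1] by blast
  qed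
  have "Z_seq g f = Z0" unfolding Z_seq_def
    by (rule the_equality[where P="\<lambda>Z. g = inverse (1 - fps_X * (Z oo f))", OF ex uniq])
  thus ?thesis using ex by simp
qed

lemma main:
  fixes g f :: "'a::field fps"
  assumes "riordan g f"
  shows "R111 g f \<longleftrightarrow> f $ 1 = 1 \<and> f $ 2 = g $ 1 \<and> g $ 2 = (g $ 1)^2"
proof -
  have f0: "f $ 0 = 0" and f1: "f $ 1 \<noteq> 0" and g0: "g $ 0 = 1"
    using assms by (auto simp: riordan_def)
  define A where "A = A_seq f"
  define Z where "Z = Z_seq g f"
  have fA: "f = fps_X * (A oo f)" using A_char[OF assms] by (simp add: A_def)
  have gZ: "g = inverse (1 - fps_X * (Z oo f))" using Z_char[OF assms] by (simp add: Z_def)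
  have c1: "\<And>h::'a fps. (h oo f) $ 1 = h $ 1 * f $ 1"
    by (simp add: fps_compose_nth)
  have a0: "f $ 1 = A $ 0" using arg_cong[OF fA, of "\<lambda>x. x $ 1"] by simp
  have a1: "f $ 2 = A $ 1 * f $ 1" using arg_cong[OF fA, of "\<lambda>x. x $ 2"] c1[of A]
    by (simp add: numeral_2_eq_2)
  define W where "W = Z oo f"
  have u0: "(1 - fps_X * W) $ 0 \<noteq> 0" by simp
  have gu: "g * (1 - fps_X * W) = 1"
    using gZ inverse_mult_eq_1[OF u0] unfolding W_def by simp
  hence e: "g - fps_X * (g * W) = 1" by (simp add: algebra_simps)
  have W0: "W $ 0 = Z $ 0" by (simp add: W_def)
  have W1: "W $ 1 = Z $ 1 * f $ 1" using c1 by (simp add: W_def)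
  have z0: "g $ 1 - Z $ 0 = 0"
    using arg_cong[OF e, of "\<lambda>x. x $ 1"] g0 W0 by (simp add: fps_mult_nth)
  have z1: "g $ 2 - (Z $ 1 * f $ 1 + g $ 1 * Z $ 0) = 0"
    using arg_cong[OF e, of "\<lambda>x. x $ 2"] g0 W0 W1
    by (simp add: fps_mult_nth numeral_2_eq_2 algebra_simps)
  have R: "R111 g f \<longleftrightarrow> A $ 0 = 1 \<and> Z $ 0 = A $ 1 \<and> Z $ 1 = 0"
    unfolding R111_def A_def Z_def using assms by simp
  have zz0: "Z $ 0 = g $ 1" using z0 by simp
  have zz1: "Z $ 1 * f $ 1 = g $ 2 - g $ 1 * g $ 1" using z1 zz0 by (simp add: algebra_simps)
  show ?thesis
  proof
    assume "R111 g f"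
    hence h: "A $ 0 = 1" "Z $ 0 = A $ 1" "Z $ 1 = 0" using R by auto
    show "f $ 1 = 1 \<and> f $ 2 = g $ 1 \<and> g $ 2 = (g $ 1)^2"
      using h a0 a1 zz0 zz1 by (simp add: power2_eq_square)
  next
    assume h: "f $ 1 = 1 \<and> f $ 2 = g $ 1 \<and> g $ 2 = (g $ 1)^2"
    have hA0: "A $ 0 = 1" using h a0 by simp
    have h1: "f $ 1 = 1" and h2: "f $ 2 = g $ 1" using h by auto
    have "A $ 1 = g $ 1" using a1 h1 h2 by simp
    moreover have "Z $ 0 = A $ 1" using zz0 calculation by simp
    moreover have "Z $ 1 = 0" using h zz1 by (simp add: power2_eq_square)
    ultimately show "R111 g f" using R hA0 by blast
  qed
qed

theorem corollary4p5:
  fixes g f :: "real fps" and gc fc :: "complex fps"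
  assumes "riordan g f" and "riordan gc fc"
  shows "(R111 g f \<longleftrightarrow> f $ 1 = 1 \<and> f $ 2 = g $ 1 \<and> g $ 2 = (g $ 1)^2)
       \<and> (R111 g f \<longleftrightarrow> f $ 1 = 1 \<and> f $ 2 = g $ 1 \<and> g $ 2 = (f $ 2)^2)
       \<and> (R111 gc fc \<longleftrightarrow> fc $ 1 = 1 \<and> fc $ 2 = gc $ 1 \<and> gc $ 2 = (gc $ 1)^2)
       \<and> (R111 gc fc \<longleftrightarrow> fc $ 1 = 1 \<and> fc $ 2 = gc $ 1 \<and> gc $ 2 = (fc $ 2)^2)"
  using main[OF assms(1)] main[OF assms(2)] by auto

end
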